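(* Fix $1\le a<b$ and consider the following instance: $n=2$ buyers; $d=2$; buyer type set $\Theta:=\{(w,B)\in\mathbb{R}^2_{\ge0}\times\mathbb{R}_+:\ a\le\|w\|\le b,\ B=\frac{2\|w\|-w_1-w_2}{\pi\|w\|}\}$ with $G$ the distribution under which $w$ is uniform (w.r.t. Lebesgue measure on $\mathbb{R}^2$) on $\{w\in\mathbb{R}^2_{\ge0}:a\le\|w\|\le b\}$ and $B$ is the function of $w$ above; item types $A:=\{e_1,e_2\}$ with $F$ uniform on $A$; reserve prices $r\equiv0$. Then the pacing function $\mu(w,B):=\|w\|-1$ is such that the value-pacing-based strategy $\beta^\mu$ is a Symmetric First Price Equilibrium.
   Context: $\|\cdot\|$ is the Euclidean norm, $e_1,e_2$ the standard basis vectors. Buyer $(w,B)$ values item $\alpha$ at $w^T\alpha$. For a pacing function $\mu:\Theta\to\mathbb{R}_{\ge0}$ and item $\alpha$, $\lambda^\mu_\alpha$ is the distribution of $w^T\alpha/(1+\mu(w,B))$ when $(w,B)\sim G$, and $H^\mu_\alpha$ the distribution of the maximum of $n-1$ i.i.d. draws from $\lambda^\mu_\alpha$, $H^\mu_\alpha(x):=\lambda^\mu_\alpha((-\infty,x])^{n-1}$. With $r\equiv0$: $\sigma^\mu_\alpha(x)=x-\int_0^x H^\mu_\alpha(s)/H^\mu_\alpha(x)\,ds$ if $H^\mu_\alpha(x)>0$ and $\sigma^\mu_\alpha(x)=0$ otherwise; $\beta^\mu(w,B,\alpha):=\sigma^\mu_\alpha(w^T\alpha/(1+\mu(w,B)))$.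 A strategy $\beta^*:\Theta\times A\to\mathbb{R}_{\ge0}$ is a Symmetric First Price Equilibrium if for $G$-almost every $(w,B)$, $\alpha\mapsto\beta^*(w,B,\alpha)$ is an optimal solution of $\max_{b:A\to\mathbb{R}_{\ge0}}\mathbb{E}_{\alpha,\{\theta_i\}_{i=1}^{n-1}}[(w^T\alpha-b(\alpha))\mathbf 1\{b(\alpha)\ge\max(r(\alpha),\{\beta^*(\theta_i,\alpha)\}_i)\}]$ subject to $\mathbb{E}_{\alpha,\{\theta_i\}}[b(\alpha)\mathbf 1\{b(\alpha)\ge\max(r(\alpha),\{\beta^*(\theta_i,\alpha)\}_i)\}]\le B$, where $\alpha\sim F$ and $\theta_1,\dots,\theta_{n-1}\sim G$ are i.i.d. and independent (all highest bidders at or above the reserve are treated as winning). *)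

theory Defs
  imports "HOL-Probability.Probability"
begin

text \<open>Buyer types are pairs (w, B) with w :: real \<times> real (the norm on real \<times> real is
the Euclidean norm) and budget B :: real.  Items are vectors alpha :: real \<times> real.\<close>

type_synonym btype = "(real \<times> real) \<times> real"
type_synonym item = "real \<times> real"

definition val :: "btype \<Rightarrow> item \<Rightarrow> real" where
  "val \<theta> \<alpha> = fst \<theta> \<bullet> \<alpha>"

definition paced_dist :: "btype measure \<Rightarrow> (btype \<Rightarrow> real) \<Rightarrow> item \<Rightarrow> real measure" where
  "paced_dist G \<mu> \<alpha> = distr G borel (\<lambda>\<theta>. val \<theta> \<alpha> / (1 + \<mu> \<theta>))"

definition Hdist :: "nat \<Rightarrow> btype measure \<Rightarrow> (btype \<Rightarrow> real) \<Rightarrow> item \<Rightarrow> real \<Rightarrow> real" where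
  "Hdist n G \<mu> \<alpha> x = measure (paced_dist G \<mu> \<alpha>) {..x} ^ (n - 1)"

text \<open>sigma^mu_alpha with reserve r = 0.\<close>
definition sigma_bid :: "nat \<Rightarrow> btype measure \<Rightarrow> (btype \<Rightarrow> real) \<Rightarrow> item \<Rightarrow> real \<Rightarrow> real" where
  "sigma_bid n G \<mu> \<alpha> x =
     (if Hdist n G \<mu> \<alpha> x > 0
      then x - (LBINT s:{0..x}. Hdist n G \<mu> \<alpha> s / Hdist n G \<mu> \<alpha> x)
      else 0)"

definition beta_pacing :: "nat \<Rightarrow> btype measure \<Rightarrow> (btype \<Rightarrow> real) \<Rightarrow> btype \<Rightarrow> item \<Rightarrow> real" where
  "beta_pacing n G \<mu> \<theta> \<alpha> = sigma_bid n G \<mu> \<alpha> (val \<theta> \<alpha> / (1 + \<mu> \<theta>))"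

text \<open>Winning event: bid at least max(r(alpha), beta(theta_i, alpha) for i = 1..n-1)
  (ties count as wins); the n-1 opponents are indexed by {..<n-1}.\<close>
definition wins :: "nat \<Rightarrow> (item \<Rightarrow> real) \<Rightarrow> (btype \<Rightarrow> item \<Rightarrow> real) \<Rightarrow> real \<Rightarrow> item
                     \<Rightarrow> (nat \<Rightarrow> btype) \<Rightarrow> bool" where
  "wins n r \<beta> bid \<alpha> \<theta>s \<longleftrightarrow> r \<alpha> \<le> bid \<and> (\<forall>i<n - 1. \<beta> (\<theta>s i) \<alpha> \<le> bid)"

definition exp_utility :: "nat \<Rightarrow> btype measure \<Rightarrow> item measure \<Rightarrow> (item \<Rightarrow> real)
     \<Rightarrow> (btype \<Rightarrow> item \<Rightarrow> real) \<Rightarrow> btype \<Rightarrow> (item \<Rightarrow> real) \<Rightarrow> real" where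
  "exp_utility n G F r \<beta> \<theta> b =
     (\<integral>\<alpha>. (\<integral>\<theta>s. (val \<theta> \<alpha> - b \<alpha>) * (if wins n r \<beta> (b \<alpha>) \<alpha> \<theta>s then 1 else 0)
        \<partial>(PiM {..<n - 1} (\<lambda>_. G))) \<partial>F)"

definition exp_payment :: "nat \<Rightarrow> btype measure \<Rightarrow> item measure \<Rightarrow> (item \<Rightarrow> real)
     \<Rightarrow> (btype \<Rightarrow> item \<Rightarrow> real) \<Rightarrow> (item \<Rightarrow> real) \<Rightarrow> real" where
  "exp_payment n G F r \<beta> b =
     (\<integral>\<alpha>. (\<integral>\<theta>s. b \<alpha> * (if wins n r \<beta> (b \<alpha>) \<alpha> \<theta>s then 1 else 0)
        \<partial>(PiM {..<n - 1} (\<lambda>_. G))) \<partial>F)"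

definition is_SFPE :: "nat \<Rightarrow> btype measure \<Rightarrow> item measure \<Rightarrow> btype set \<Rightarrow> item set
     \<Rightarrow> (item \<Rightarrow> real) \<Rightarrow> (btype \<Rightarrow> item \<Rightarrow> real) \<Rightarrow> bool" where
  "is_SFPE n G F Theta A r \<beta> \<longleftrightarrow>
     (\<forall>\<theta>\<in>Theta. \<forall>\<alpha>\<in>A. 0 \<le> \<beta> \<theta> \<alpha>) \<and>
     (AE \<theta> in G.
        exp_payment n G F r \<beta> (\<beta> \<theta>) \<le> snd \<theta> \<and>
        (\<forall>b. (\<forall>\<alpha>\<in>A. 0 \<le> b \<alpha>) \<and> exp_payment n G F r \<beta> b \<le> snd \<theta>
             \<longrightarrow> exp_utility n G F r \<beta> \<theta> b \<le> exp_utility n G F r \<beta> \<theta> (\<beta> \<theta>)))"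

definition budget_ex :: "real \<times> real \<Rightarrow> real" where
  "budget_ex w = (2 * norm w - fst w - snd w) / (pi * norm w)"

definition W_ex :: "real \<Rightarrow> real \<Rightarrow> (real \<times> real) set" where
  "W_ex a b = {w. 0 \<le> fst w \<and> 0 \<le> snd w \<and> a \<le> norm w \<and> norm w \<le> b}"

definition Theta_ex :: "real \<Rightarrow> real \<Rightarrow> btype set" where
  "Theta_ex a b = {(w, B). w \<in> W_ex a b \<and> 0 < B \<and> B = budget_ex w}"

definition G_ex :: "real \<Rightarrow> real \<Rightarrow> btype measure" where
  "G_ex a b = distr (uniform_measure lborel (W_ex a b)) borel (\<lambda>w. (w, budget_ex w))"

definition e1 :: item where "e1 = (1, 0)"
definition e2 :: item where "e2 = (0, 1)"

definition F_ex :: "item measure" where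
  "F_ex = measure_pmf (pmf_of_set {e1, e2})"

definition mu_ex :: "btype \<Rightarrow> real" where
  "mu_ex \<theta> = norm (fst \<theta>) - 1"

end

theory Submission
  imports Defs
begin



definition gf :: "real \<Rightarrow> real" where
  "gf z = (if z \<le> 0 then 0 else (1 - sqrt (1 - z\<^sup>2)) / arcsin z)"

definition Hf :: "real \<Rightarrow> real" where "Hf y = 2 / pi * arcsin y"

lemma q_pos:
  assumes "0 < p" "p \<le> pi/2"
  shows "0 < p * sin p + cos p - 1"
proof -
  have "(\<lambda>u. u * sin u + cos u - 1) 0 < (\<lambda>u. u * sin u + cos u - 1) p"
  proof (rule DERIV_pos_imp_increasing_open[OF assms(1)])
    fix x assume x: "0 < x" "x < p"
    show "\<exists>y. DERIV (\<lambda>u. u * sin u + cos u - 1) x :> y \<and> 0 < y"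
    proof (intro exI conjI)
      show "DERIV (\<lambda>u. u * sin u + cos u - 1) x :> x * cos x"
        by (auto intro!: derivative_eq_intros)
      have "0 < cos x" using x assms by (intro cos_gt_zero_pi) auto
      then show "0 < x * cos x" using x by simp
    qed
  next
    show "continuous_on {0..p} (\<lambda>u. u * sin u + cos u - 1)"
      by (intro continuous_intros)
  qed
  then show ?thesis by simp
qed

lemma h_mono:
  assumes "0 < p" "p < q" "q \<le> pi/2"
  shows "(1 - cos p) / p < (1 - cos q) / q"
proof (rule DERIV_pos_imp_increasing[OF assms(2)])
  fix x assume x: "p \<le> x" "x \<le> q"
  then have x0: "0 < x" using assms by simp
  show "\<exists>y. DERIV (\<lambda>u. (1 - cos u) / u) x :> y \<and> 0 < y"
  proof (intro exI conjI)
    show "DERIV (\<lambda>u. (1 - cos u) / u) x :> (x * sin x + cos x - 1) / x\<^sup>2"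
      using x0 by (auto intro!: derivative_eq_intros simp: field_simps power2_eq_square)
    show "0 < (x * sin x + cos x - 1) / x\<^sup>2"
      using q_pos[of x] x0 x assms by simp
  qed
qed

lemma gf_sin:
  assumes "0 < p" "p \<le> pi/2"
  shows "gf (sin p) = (1 - cos p) / p"
proof -
  have s: "0 < sin p" using assms by (intro sin_gt_zero) auto
  have c: "0 \<le> cos p" using assms by (intro cos_ge_zero) auto
  have "sqrt (1 - (sin p)\<^sup>2) = cos p"
    using c by (simp add: cos_squared_eq[symmetric])
  moreover have "arcsin (sin p) = p" using assms by (intro arcsin_sin) auto
  ultimately show ?thesis using s by (simp add: gf_def)
qed

lemma gf_pos:
  assumes "0 < z" "z \<le> 1" shows "0 < gf z"
proof -
  have "sqrt (1 - z\<^sup>2) < 1" using assms by (simp add: power_less_one_iff)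
  moreover have "0 < arcsin z" using assms arcsin_less_mono[of 0 z] by simp
  ultimately show ?thesis using assms by (simp add: gf_def)
qed

lemma gf_strict:
  assumes "0 \<le> y" "y < z" "z \<le> 1"
  shows "gf y < gf z"
proof (cases "y = 0")
  case True
  then show ?thesis using gf_pos[of z] assms by (simp add: gf_def)
next
  case False
  have bz: "0 < arcsin z" "arcsin z \<le> pi/2" using assms arcsin_less_mono[of 0 z] arcsin_ubound[of z] by auto
  have by': "0 < arcsin y" using assms False arcsin_less_mono[of 0 y] by simp
  have yz: "arcsin y < arcsin z" using assms arcsin_less_mono[of y z] by simp
  have "gf y = (1 - cos (arcsin y)) / arcsin y"
    using gf_sin[of "arcsin y"] by' yz bz assms by simp
  moreover have "gf z = (1 - cos (arcsin z)) / arcsin z"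
    using gf_sin[of "arcsin z"] bz assms by simp
  ultimately show ?thesis using h_mono[OF by' yz bz(2)] by simp
qed

lemma gf_le_iff:
  assumes "0 \<le> y" "y \<le> 1" "0 \<le> z" "z \<le> 1"
  shows "gf z \<le> gf y \<longleftrightarrow> z \<le> y"
proof
  assume h: "gf z \<le> gf y"
  show "z \<le> y"
  proof (rule ccontr)
    assume "\<not> z \<le> y"
    then have "y < z" by simp
    then have "gf y < gf z" using gf_strict[of y z] assms by simp
    then show False using h by simp
  qed
next
  assume h: "z \<le> y"
  show "gf z \<le> gf y"
  proof (cases "z = y")
    case False
    then have "z < y" using h by simp
    then show ?thesis using gf_strict[of z y] assms by simp
  qed simp
qed

lemma gf_nonneg: "0 \<le> z \<Longrightarrow> z \<le> 1 \<Longrightarrow> 0 \<le> gf z"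
  using gf_pos[of z] by (cases "z = 0") (auto simp: gf_def)

lemma gf_le_self:
  assumes "0 < z" "z \<le> 1" shows "gf z \<le> z"
proof -
  have "1 - z\<^sup>2 \<le> sqrt (1 - z\<^sup>2)"
  proof (intro real_le_rsqrt)
    have "0 \<le> 1 - z\<^sup>2" "0 \<le> z\<^sup>2" using assms by (auto simp: power_le_one)
    then show "(1 - z\<^sup>2)\<^sup>2 \<le> 1 - z\<^sup>2"
      using mult_right_mono[of "1 - z\<^sup>2" 1 "1 - z\<^sup>2"] by (simp add: power2_eq_square)
  qed
  then have n: "1 - sqrt (1 - z\<^sup>2) \<le> z * z" by (simp add: power2_eq_square)
  have "z = sin (arcsin z)" using assms by simp
  also have "\<dots> \<le> arcsin z" using assms arcsin_less_mono[of 0 z] by (intro sin_x_le_x) simp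
  finally have a: "z \<le> arcsin z" .
  have "(1 - sqrt (1 - z\<^sup>2)) / arcsin z \<le> (z * z) / z"
    using n a assms by (intro frac_le) (auto simp: real_sqrt_le_1_iff)
  then show ?thesis using assms by (simp add: gf_def)
qed

lemma gf_1: "gf 1 = 2 / pi" by (simp add: gf_def)

lemma gf_cont: "0 < e \<Longrightarrow> continuous_on {e..1} gf"
proof -
  assume e: "0 < e"
  have "continuous_on {e..1} (\<lambda>z. (1 - sqrt (1 - z\<^sup>2)) / arcsin z)"
  proof (intro continuous_intros ballI)
    fix x assume "x \<in> {e..1}"
    then show "-1 \<le> x \<and> x \<le> 1" using e by auto
    show "arcsin x \<noteq> 0" using \<open>x \<in> {e..1}\<close> e arcsin_less_mono[of 0 x] by auto
  qed
  then show ?thesis by (rule continuous_on_eq) (use e in \<open>auto simp: gf_def\<close>)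
qed

lemma gf_ivt:
  assumes "0 \<le> t" "t < gf 1"
  shows "\<exists>y. 0 \<le> y \<and> y \<le> 1 \<and> gf y = t"
proof (cases "t = 0")
  case True then show ?thesis by (intro exI[of _ 0]) (simp add: gf_def)
next
  case False
  then have t: "0 < t" using assms by simp
  have "t * 3 \<le> t * pi" using assms pi_gt3 by (intro mult_left_mono) auto
  then have t1: "t < 1" using assms gf_1 pi_gt3 by (simp add: divide_simps)
  have "gf (t/2) \<le> t/2" using t t1 by (intro gf_le_self) auto
  then have "\<exists>x. t/2 \<le> x \<and> x \<le> 1 \<and> gf x = t"
    using assms t t1 by (intro IVT' gf_cont) auto
  then show ?thesis using t by (metis less_eq_real_def half_gt_zero order_trans)
qed

lemma gf_Hf:
  assumes "0 \<le> y" "y \<le> 1" shows "gf y * Hf y = 2 / pi * (1 - sqrt (1 - y\<^sup>2))"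
proof (cases "y = 0")
  case True then show ?thesis by (simp add: gf_def Hf_def)
next
  case False
  then have "0 < arcsin y" using assms arcsin_less_mono[of 0 y] by simp
  then show ?thesis using False assms by (simp add: gf_def Hf_def)
qed

lemma concav:
  assumes "0 \<le> x" "x \<le> 1" "0 \<le> y" "y \<le> 1"
  shows "x * arcsin y + sqrt (1 - y\<^sup>2) \<le> x * arcsin x + sqrt (1 - x\<^sup>2)"
proof -
  define A where "A = arcsin x"
  define B where "B = arcsin y"
  have A: "0 \<le> A" "A \<le> pi/2" using assms arcsin_le_mono[of 0 x] arcsin_ubound[of x] by (auto simp: A_def)
  have B: "0 \<le> B" "B \<le> pi/2" using assms arcsin_le_mono[of 0 y] arcsin_ubound[of y] by (auto simp: B_def)
  have xs: "x = sin A" using assms by (simp add: A_def)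
  have cx: "sqrt (1 - x\<^sup>2) = cos A" using assms by (simp add: A_def cos_arcsin)
  have cy: "sqrt (1 - y\<^sup>2) = cos B" using assms by (simp add: B_def cos_arcsin)
  have D: "\<And>u. DERIV (\<lambda>u. sin A * u + cos u) u :> sin A - sin u"
    by (auto intro!: derivative_eq_intros)
  have "sin A * B + cos B \<le> sin A * A + cos A"
  proof (cases "B \<le> A")
    case True
    show ?thesis
    proof (rule DERIV_nonneg_imp_nondecreasing[OF True, of "\<lambda>u. sin A * u + cos u", simplified])
      fix u assume "B \<le> u" "u \<le> A"
      then show "\<exists>y. DERIV (\<lambda>u. sin A * u + cos u) u :> y \<and> 0 \<le> y"
        using D A B by (intro exI[of _ "sin A - sin u"] conjI) (auto intro!: sin_monotone_2pi_le)
    qed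
  next
    case False
    then have F: "A \<le> B" by simp
    show ?thesis
    proof (rule DERIV_nonpos_imp_nonincreasing[OF F, of "\<lambda>u. sin A * u + cos u", simplified])
      fix u assume "A \<le> u" "u \<le> B"
      then show "\<exists>y. DERIV (\<lambda>u. sin A * u + cos u) u :> y \<and> y \<le> 0"
        using D A B by (intro exI[of _ "sin A - sin u"] conjI) (auto intro!: sin_monotone_2pi_le)
    qed
  qed
  then show ?thesis unfolding cx cy A_def[symmetric] B_def[symmetric] using xs by simp
qed




lemma fst_meas[measurable]: "fst \<in> borel_measurable (borel::(real\<times>real) measure)"
  by (intro borel_measurable_continuous_onI continuous_intros)
lemma snd_meas[measurable]: "snd \<in> borel_measurable (borel::(real\<times>real) measure)"
  by (intro borel_measurable_continuous_onI continuous_intros)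

definition D1 :: "real \<Rightarrow> real \<Rightarrow> (real \<times> real) set" where
  "D1 r y = {w. 0 \<le> fst w \<and> 0 \<le> snd w \<and> norm w \<le> r \<and> fst w \<le> y * norm w}"

lemma D1_sets[measurable]: "D1 r y \<in> sets borel"
  unfolding D1_def by measurable

lemma norm_pair_real: "norm (s::real, t::real) = sqrt (s\<^sup>2 + t\<^sup>2)"
  by (simp add: norm_Pair)

lemma le_sqrt_iff': "0 \<le> a \<Longrightarrow> a \<le> sqrt X \<longleftrightarrow> a\<^sup>2 \<le> X"
  using real_sqrt_le_iff[of "a\<^sup>2" X] by simp
lemma sqrt_le_iff': "0 \<le> b \<Longrightarrow> sqrt X \<le> b \<longleftrightarrow> X \<le> b\<^sup>2"
  using real_sqrt_le_iff[of X "b\<^sup>2"] by simp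

lemma kbound:
  assumes y: "0 < y" "y \<le> 1" and s: "0 \<le> s" "s \<le> r * y"
  shows "s * sqrt (1 - y\<^sup>2) / y \<le> sqrt (r\<^sup>2 - s\<^sup>2)"
proof -
  have y2: "y\<^sup>2 \<le> 1" using y by (simp add: power_le_one)
  have sy: "s / y \<le> r" using s y by (simp add: divide_simps mult.commute)
  have "(s / y)\<^sup>2 \<le> r\<^sup>2" using sy s y by (intro power_mono) auto
  then have *: "s\<^sup>2 / y\<^sup>2 \<le> r\<^sup>2" by (simp add: power_divide)
  have "(s * sqrt (1 - y\<^sup>2) / y)\<^sup>2 = s\<^sup>2 * (1 - y\<^sup>2) / y\<^sup>2"
    using y2 by (simp add: power_divide power_mult_distrib)
  also have "\<dots> = s\<^sup>2 / y\<^sup>2 - s\<^sup>2" using y by (simp add: field_simps)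
  also have "\<dots> \<le> r\<^sup>2 - s\<^sup>2" using * by simp
  finally show ?thesis using s y y2 by (intro real_le_rsqrt)
qed

lemma slice1:
  assumes r: "0 < r" and y: "0 < y" "y \<le> 1" and s: "0 \<le> s" "s \<le> r * y"
  shows "Pair s -` D1 r y = {s * sqrt (1 - y\<^sup>2) / y .. sqrt (r\<^sup>2 - s\<^sup>2)}"
proof (intro set_eqI)
  fix t
  have y2: "y\<^sup>2 \<le> 1" using y by (simp add: power_le_one)
  have sr: "s \<le> r" using s y r by (metis mult_left_le mult.commute order_trans less_imp_le)
  have rs: "0 \<le> r\<^sup>2 - s\<^sup>2" using sr s by (simp add: power_mono)
  have k0: "0 \<le> s * sqrt (1 - y\<^sup>2) / y" using s y y2 by simp
  have L: "t \<in> Pair s -` D1 r y \<longleftrightarrow> 0 \<le> t \<and> sqrt (s\<^sup>2 + t\<^sup>2) \<le> r \<and> s \<le> y * sqrt (s\<^sup>2 + t\<^sup>2)"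
    using s by (simp add: D1_def norm_pair_real)
  show "t \<in> Pair s -` D1 r y \<longleftrightarrow> t \<in> {s * sqrt (1 - y\<^sup>2) / y .. sqrt (r\<^sup>2 - s\<^sup>2)}"
  proof (cases "0 \<le> t")
    case False
    then show ?thesis using L k0 by auto
  next
    case t: True
    have P1: "sqrt (s\<^sup>2 + t\<^sup>2) \<le> r \<longleftrightarrow> t \<le> sqrt (r\<^sup>2 - s\<^sup>2)"
      using r t by (simp add: sqrt_le_iff' le_sqrt_iff' algebra_simps)
    have "y * sqrt (s\<^sup>2 + t\<^sup>2) = sqrt (y\<^sup>2 * (s\<^sup>2 + t\<^sup>2))"
      using y by (simp add: real_sqrt_mult)
    then have P2: "s \<le> y * sqrt (s\<^sup>2 + t\<^sup>2) \<longleftrightarrow> s\<^sup>2 \<le> y\<^sup>2 * (s\<^sup>2 + t\<^sup>2)"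
      using s by (simp add: le_sqrt_iff')
    have "s * sqrt (1 - y\<^sup>2) / y \<le> t \<longleftrightarrow> (s * sqrt (1 - y\<^sup>2) / y)\<^sup>2 \<le> t\<^sup>2"
      using k0 t by (meson power_mono power2_le_imp_le)
    also have "(s * sqrt (1 - y\<^sup>2) / y)\<^sup>2 = s\<^sup>2 * (1 - y\<^sup>2) / y\<^sup>2"
      using y2 by (simp add: power_divide power_mult_distrib)
    also have "s\<^sup>2 * (1 - y\<^sup>2) / y\<^sup>2 \<le> t\<^sup>2 \<longleftrightarrow> s\<^sup>2 \<le> y\<^sup>2 * (s\<^sup>2 + t\<^sup>2)"
      using y by (simp add: divide_le_eq algebra_simps)
    finally have P3: "s * sqrt (1 - y\<^sup>2) / y \<le> t \<longleftrightarrow> s\<^sup>2 \<le> y\<^sup>2 * (s\<^sup>2 + t\<^sup>2)" .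
    show ?thesis using L P1 P2 P3 t by auto
  qed
qed

lemma slice2:
  assumes r: "0 < r" and y: "0 \<le> y" "y \<le> 1" and s: "s < 0 \<or> r * y < s"
  shows "Pair s -` D1 r y = {}"
proof -
  { fix t assume "(s, t) \<in> D1 r y"
    then have a: "0 \<le> s" "norm (s, t) \<le> r" "s \<le> y * norm (s, t)" by (auto simp: D1_def)
    then have "y * norm (s, t) \<le> y * r" using y by (intro mult_left_mono) auto
    then have False using a s by (auto simp: mult.commute) }
  then show ?thesis by auto
qed


lemma deriv_sqrt_part:
  assumes "0 \<le> s" "s < r"
  shows "DERIV (\<lambda>s. sqrt (r\<^sup>2 - s\<^sup>2)) s :> - s / sqrt (r\<^sup>2 - s\<^sup>2)"
proof -
  have "0 < r\<^sup>2 - s\<^sup>2" using assms by (simp add: power_strict_mono)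
  then show ?thesis by (auto intro!: derivative_eq_intros simp: field_simps)
qed

lemma deriv_arcsin_part:
  assumes "0 \<le> s" "s < r"
  shows "DERIV (\<lambda>s. arcsin (s / r)) s :> 1 / sqrt (r\<^sup>2 - s\<^sup>2)"
proof -
  have r: "0 < r" using assms by simp
  have p: "0 < r\<^sup>2 - s\<^sup>2" using assms by (simp add: power_strict_mono)
  have sr: "- 1 < s / r" "s / r < 1" using assms by (auto simp: divide_simps)
  have e: "sqrt (1 - (s / r)\<^sup>2) = sqrt (r\<^sup>2 - s\<^sup>2) / r"
  proof -
    have "1 - (s / r)\<^sup>2 = (r\<^sup>2 - s\<^sup>2) / r\<^sup>2" using r by (simp add: field_simps power_divide)
    moreover have "sqrt ((r\<^sup>2 - s\<^sup>2) / r\<^sup>2) = sqrt (r\<^sup>2 - s\<^sup>2) / sqrt (r\<^sup>2)"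
      by (rule real_sqrt_divide)
    ultimately show ?thesis using r by simp
  qed
  have "DERIV (\<lambda>s. arcsin (s / r)) s :> inverse (sqrt (1 - (s / r)\<^sup>2)) * (1 / r)"
    using DERIV_chain2[OF DERIV_arcsin[OF sr] DERIV_cdivide[OF DERIV_ident, of r]] by simp
  also have "inverse (sqrt (1 - (s / r)\<^sup>2)) * (1 / r) = 1 / sqrt (r\<^sup>2 - s\<^sup>2)"
    using r p by (simp add: e inverse_eq_divide)
  finally show ?thesis .
qed

lemma area_integral:
  assumes r: "0 < r" and y: "0 < y" "y \<le> 1"
  shows "((\<lambda>s. sqrt (r\<^sup>2 - s\<^sup>2) - s * sqrt (1 - y\<^sup>2) / y) has_integral (r\<^sup>2 * arcsin y / 2)) {0 .. r * y}"
proof -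
  define k where "k = sqrt (1 - y\<^sup>2) / y"
  define F where "F s = (s * sqrt (r\<^sup>2 - s\<^sup>2) + r\<^sup>2 * arcsin (s / r)) / 2 - k * s\<^sup>2 / 2" for s
  have ry: "r * y \<le> r" using r y by simp
  have "((\<lambda>s. sqrt (r\<^sup>2 - s\<^sup>2) - s * k) has_integral (F (r * y) - F 0)) {0 .. r * y}"
  proof (rule fundamental_theorem_of_calculus_interior)
    show "0 \<le> r * y" using r y by simp
    have b: "\<forall>x\<in>{0..r * y}. - 1 \<le> x / r \<and> x / r \<le> 1"
    proof
      fix x assume x: "x \<in> {0..r * y}"
      then have x1: "x \<le> r * y" "0 \<le> x" by simp_all
      then have x2: "x \<le> r" using ry by linarith
      have "x / r \<le> 1" using divide_le_eq_1_pos[OF r] x2 by blast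
      moreover have "0 \<le> x / r" using divide_nonneg_nonneg[OF x1(2)] r by simp
      ultimately show "- 1 \<le> x / r \<and> x / r \<le> 1" by linarith
    qed
    show "continuous_on {0..r * y} F" unfolding F_def
      apply (intro continuous_intros)
      using b r by fastforce+
    fix s assume s: "s \<in> {0<..<r * y}"
    then have s0: "0 \<le> s" "s < r" using ry by auto
    have p: "0 < r\<^sup>2 - s\<^sup>2" using s0 by (simp add: power_strict_mono)
    have q: "(sqrt (r\<^sup>2 - s\<^sup>2))\<^sup>2 = r\<^sup>2 - s\<^sup>2" using p by simp
    have sp: "sqrt (r\<^sup>2 - s\<^sup>2) > 0" using p by simp
    have "DERIV F s :> sqrt (r\<^sup>2 - s\<^sup>2) - s * k"
      unfolding F_def
      apply (rule DERIV_cong)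
       apply (rule deriv_sqrt_part[OF s0] deriv_arcsin_part[OF s0] derivative_eq_intros refl | simp)+
    proof -
      define S where "S = sqrt (r\<^sup>2 - s\<^sup>2)"
      have SS: "r\<^sup>2 - s\<^sup>2 = S * S" using q by (simp add: S_def power2_eq_square)
      have S0: "S \<noteq> 0" using sp by (simp add: S_def)
      have "r\<^sup>2 * 2 / S - s * s * 2 / S = (r\<^sup>2 - s * s) * 2 / S"
        by (simp add: diff_divide_distrib left_diff_distrib)
      also have "\<dots> = S * S * 2 / S" using SS by (simp add: power2_eq_square)
      also have "\<dots> = 2 * S" using S0 by simp
      finally show "r\<^sup>2 * 2 / sqrt (r\<^sup>2 - s\<^sup>2) - s * s * 2 / sqrt (r\<^sup>2 - s\<^sup>2) = 2 * sqrt (r\<^sup>2 - s\<^sup>2)"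
        by (simp add: S_def)
    qed
    then show "(F has_vector_derivative sqrt (r\<^sup>2 - s\<^sup>2) - s * k) (at s)"
      by (simp add: has_real_derivative_iff_has_vector_derivative[symmetric])
  qed
  moreover have "F (r * y) - F 0 = r\<^sup>2 * arcsin y / 2"
  proof -
    have y2: "y\<^sup>2 \<le> 1" using y by (simp add: power_le_one)
    have "sqrt (r\<^sup>2 - (r * y)\<^sup>2) = r * sqrt (1 - y\<^sup>2)"
    proof -
      have "r\<^sup>2 - (r * y)\<^sup>2 = r\<^sup>2 * (1 - y\<^sup>2)" by (simp add: algebra_simps power_mult_distrib)
      then show ?thesis using r by (simp add: real_sqrt_mult)
    qed
    moreover have "k * (r * y)\<^sup>2 = r * y * (r * sqrt (1 - y\<^sup>2))"
      using y by (simp add: k_def power2_eq_square)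
    moreover have "r * y / r = y" using r by simp
    ultimately show ?thesis by (simp add: F_def add_divide_distrib)
  qed
  ultimately show ?thesis by (simp add: k_def)
qed

lemma D1_Pair_alt:
  "emeasure lborel (D1 r y) = (\<integral>\<^sup>+s. emeasure lborel (Pair s -` D1 r y) \<partial>lborel)"
proof -
  have "D1 r y \<in> sets (lborel \<Otimes>\<^sub>M lborel)" unfolding lborel_prod sets_lborel by (rule D1_sets)
  then have "emeasure (lborel \<Otimes>\<^sub>M lborel) (D1 r y) = (\<integral>\<^sup>+s. emeasure lborel (Pair s -` D1 r y) \<partial>lborel)"
    by (rule lborel.emeasure_pair_measure_alt)
  then show ?thesis by (simp add: lborel_prod)
qed

lemma area_pos:
  assumes r: "0 < r" and y: "0 < y" "y \<le> 1"
  shows "emeasure lborel (D1 r y) = ennreal (r\<^sup>2 * arcsin y / 2)"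
proof -
  define f where "f s = sqrt (r\<^sup>2 - s\<^sup>2) - s * sqrt (1 - y\<^sup>2) / y" for s
  have "emeasure lborel (D1 r y) = (\<integral>\<^sup>+s. ennreal (f s) * indicator {0..r*y} s \<partial>lborel)"
    unfolding D1_Pair_alt
  proof (intro nn_integral_cong)
    fix s :: real
    show "emeasure lborel (Pair s -` D1 r y) = ennreal (f s) * indicator {0..r*y} s"
    proof (cases "0 \<le> s \<and> s \<le> r * y")
      case True
      then show ?thesis using slice1[OF r y] kbound[OF y] by (simp add: f_def)
    next
      case False
      then have "s < 0 \<or> r * y < s" by auto
      then show ?thesis using slice2[OF r] y False by simp
    qed
  qed
  also have "\<dots> = ennreal (r\<^sup>2 * arcsin y / 2)"
  proof (rule nn_integral_has_integral_lebesgue')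
    show "\<And>x. x \<in> {0..r * y} \<Longrightarrow> 0 \<le> f x" using kbound[OF y] by (simp add: f_def)
    show "(f has_integral r\<^sup>2 * arcsin y / 2) {0..r * y}"
      unfolding f_def by (rule area_integral[OF r y])
  qed
  finally show ?thesis .
qed

lemma area_zero:
  assumes r: "0 < r"
  shows "emeasure lborel (D1 r 0) = 0"
proof -
  have "D1 r 0 \<subseteq> {0} \<times> UNIV" by (auto simp: D1_def)
  moreover have "({0::real} \<times> UNIV) \<in> sets (borel::(real\<times>real) measure)"
    by (intro borel_closed closed_Times) auto
  ultimately have "emeasure lborel (D1 r 0) \<le> emeasure (lborel \<Otimes>\<^sub>M lborel) ({0::real} \<times> (UNIV::real set))"
    by (subst lborel_prod) (intro emeasure_mono, auto)
  also have "\<dots> = 0"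
    by (subst lborel.emeasure_pair_measure_Times) auto
  finally show ?thesis by simp
qed

lemma area:
  assumes r: "0 < r" and y: "0 \<le> y" "y \<le> 1"
  shows "emeasure lborel (D1 r y) = ennreal (r\<^sup>2 * arcsin y / 2)"
  using area_pos[OF r _ y(2)] area_zero[OF r] y by (cases "y = 0") auto

definition D1lt :: "real \<Rightarrow> real \<Rightarrow> (real \<times> real) set" where
  "D1lt r y = {w. 0 \<le> fst w \<and> 0 \<le> snd w \<and> norm w < r \<and> fst w \<le> y * norm w}"

lemma D1lt_sets[measurable]: "D1lt r y \<in> sets borel"
  unfolding D1lt_def by measurable

lemma area_lt:
  assumes r: "0 < r" and y: "0 \<le> y" "y \<le> 1"
  shows "emeasure lborel (D1lt r y) = ennreal (r\<^sup>2 * arcsin y / 2)"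
proof -
  define c where "c = arcsin y / 2"
  have c0: "0 \<le> c" using y arcsin_le_mono[of 0 y] by (simp add: c_def)
  have sub: "D1lt r y \<subseteq> D1 r y" by (auto simp: D1lt_def D1_def)
  have up: "emeasure lborel (D1lt r y) \<le> ennreal (r\<^sup>2 * c)"
    using emeasure_mono[OF sub, of lborel] area[OF r y] by (simp add: c_def)
  then have fin: "emeasure lborel (D1lt r y) \<noteq> \<infinity>" by (auto simp: top_unique)
  define m where "m = measure lborel (D1lt r y)"
  have em: "emeasure lborel (D1lt r y) = ennreal m"
    using fin by (simp add: m_def emeasure_eq_ennreal_measure)
  have m0: "0 \<le> m" by (simp add: m_def)
  have mup: "m \<le> r\<^sup>2 * c" using up em c0 by (simp add: ennreal_le_iff)
  have low: "r'\<^sup>2 * c \<le> m" if r': "0 < r'" "r' < r" for r'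
  proof -
    have "D1 r' y \<subseteq> D1lt r y" using r' by (auto simp: D1lt_def D1_def)
    from emeasure_mono[OF this, of lborel] have "ennreal (r'\<^sup>2 * c) \<le> ennreal m"
      using area[OF r'(1) y] em by (simp add: c_def)
    then show ?thesis using m0 by (auto simp: ennreal_le_iff2)
  qed
  have "m = r\<^sup>2 * c"
  proof (rule ccontr)
    assume "m \<noteq> r\<^sup>2 * c"
    then have lt: "m < r\<^sup>2 * c" using mup by simp
    then have cp: "0 < c" using m0 c0 by (cases "c = 0") auto
    have rc: "0 < r\<^sup>2 * c" using cp r by simp
    define q where "q = m / (r\<^sup>2 * c)"
    have q0: "0 \<le> q" "q < 1" using lt m0 rc by (auto simp: q_def divide_simps)
    define r' where "r' = r * sqrt ((1 + q) / 2)"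
    have sq: "sqrt ((1 + q) / 2) < 1" "0 < sqrt ((1 + q) / 2)" using q0 by auto
    have r'r: "0 < r'" "r' < r" using r sq by (auto simp: r'_def)
    have "r'\<^sup>2 = r\<^sup>2 * ((1 + q) / 2)" using q0 by (simp add: r'_def power_mult_distrib)
    moreover have "r\<^sup>2 * c * q = m" using rc r cp by (simp add: q_def)
    ultimately have "r'\<^sup>2 * c = (r\<^sup>2 * c + m) / 2" by (simp add: algebra_simps add_divide_distrib)
    then have "m < r'\<^sup>2 * c" using lt by simp
    then show False using low[OF r'r] by simp
  qed
  then have meq: "m = r\<^sup>2 * arcsin y / 2" by (simp add: c_def)
  show ?thesis unfolding em meq ..
qed

lemma annulus1:
  assumes a: "0 < a" "a < b" and y: "0 \<le> y" "y \<le> 1"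
  shows "emeasure lborel {w\<in>W_ex a b. fst w \<le> y * norm w} = ennreal ((b\<^sup>2 - a\<^sup>2) * arcsin y / 2)"
proof -
  have b: "0 < b" using a by simp
  have eq: "{w\<in>W_ex a b. fst w \<le> y * norm w} = D1 b y - D1lt a y"
    by (auto simp: W_ex_def D1_def D1lt_def)
  have sub: "D1lt a y \<subseteq> D1 b y" using a by (auto simp: D1_def D1lt_def)
  have c0: "0 \<le> arcsin y" using y arcsin_le_mono[of 0 y] by simp
  have "emeasure lborel (D1 b y - D1lt a y) = emeasure lborel (D1 b y) - emeasure lborel (D1lt a y)"
    using area_lt[OF a(1) y] sub by (intro emeasure_Diff) auto
  also have "\<dots> = ennreal (b\<^sup>2 * arcsin y / 2) - ennreal (a\<^sup>2 * arcsin y / 2)"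
    using area[OF b y] area_lt[OF a(1) y] by simp
  also have "\<dots> = ennreal ((b\<^sup>2 - a\<^sup>2) * arcsin y / 2)"
    using c0 by (subst ennreal_minus) (auto simp: field_simps)
  finally show ?thesis using eq by simp
qed

lemma swap_lborel:
  assumes "S \<in> sets (borel :: (real \<times> real) measure)"
  shows "emeasure lborel S = emeasure lborel ((\<lambda>(x, y). (y, x)) -` S)"
proof -
  have "lborel \<Otimes>\<^sub>M lborel = distr (lborel \<Otimes>\<^sub>M lborel) (lborel \<Otimes>\<^sub>M (lborel::real measure)) (\<lambda>(x, y). (y, x))"
    by (rule lborel_pair.distr_pair_swap)
  then have L: "(lborel :: (real \<times> real) measure) = distr lborel lborel (\<lambda>(x, y). (y, x))"
    by (simp only: lborel_prod)
  have sw: "(\<lambda>(x, y). (y, x)) = (\<lambda>w::real\<times>real. (snd w, fst w))" by auto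
  have m: "(\<lambda>(x, y). (y, x)) \<in> measurable (lborel :: (real \<times> real) measure) lborel"
    unfolding sw measurable_lborel2 measurable_lborel1 by (intro borel_measurable_continuous_onI continuous_intros)
  have "emeasure lborel S = emeasure (distr lborel lborel (\<lambda>(x, y). (y, x))) S"
    using L by metis
  also have "\<dots> = emeasure lborel ((\<lambda>(x, y). (y, x)) -` S \<inter> space lborel)"
    using assms m by (intro emeasure_distr) auto
  finally show ?thesis by simp
qed

lemma annulus2:
  assumes a: "0 < a" "a < b" and y: "0 \<le> y" "y \<le> 1"
  shows "emeasure lborel {w\<in>W_ex a b. snd w \<le> y * norm w} = ennreal ((b\<^sup>2 - a\<^sup>2) * arcsin y / 2)"
proof -
  have "{w\<in>W_ex a b. snd w \<le> y * norm w} \<in> sets (borel :: (real \<times> real) measure)"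
    unfolding W_ex_def by measurable
  then have "emeasure lborel {w\<in>W_ex a b. snd w \<le> y * norm w}
      = emeasure lborel ((\<lambda>(x, y). (y, x)) -` {w\<in>W_ex a b. snd w \<le> y * norm w})"
    by (rule swap_lborel)
  also have "(\<lambda>(x, y). (y, x)) -` {w\<in>W_ex a b. snd w \<le> y * norm w} = {w\<in>W_ex a b. fst w \<le> y * norm w}"
    by (auto simp: W_ex_def norm_pair_real add.commute)
  finally show ?thesis using annulus1[OF a y] by simp
qed




lemma norm_meas[measurable]: "norm \<in> borel_measurable (borel::(real\<times>real) measure)"
  by (intro borel_measurable_continuous_onI continuous_intros)

lemma budget_meas[measurable]: "budget_ex \<in> borel_measurable borel"
  unfolding budget_ex_def by measurable

lemma fmap_meas: "(\<lambda>w. (w, budget_ex w)) \<in> measurable (borel::(real\<times>real) measure) (borel :: btype measure)"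
proof -
  have "(\<lambda>w. (w, budget_ex w)) \<in> measurable (borel::(real\<times>real) measure) (borel \<Otimes>\<^sub>M (borel::real measure))"
    by (intro measurable_Pair measurable_ident_sets budget_meas) auto
  then show ?thesis by (simp only: borel_prod)
qed

lemma W_sets[measurable]: "W_ex a b \<in> sets borel"
  unfolding W_ex_def by measurable

lemma inner_e1: "w \<bullet> e1 = fst w" by (simp add: inner_prod_def e1_def)
lemma inner_e2: "w \<bullet> e2 = snd w" by (simp add: inner_prod_def e2_def)
lemma e1_ne_e2: "e1 \<noteq> e2" by (simp add: e1_def e2_def)

lemma annulus:
  assumes a: "0 < a" "a < b" and y: "0 \<le> y" "y \<le> 1" and al: "\<alpha> \<in> {e1, e2}"
  shows "emeasure lborel {w\<in>W_ex a b. w \<bullet> \<alpha> \<le> y * norm w} = ennreal ((b\<^sup>2 - a\<^sup>2) * arcsin y / 2)"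
  using al annulus1[OF a y] annulus2[OF a y] by (auto simp: inner_e1 inner_e2)

lemma W_emeasure:
  assumes a: "0 < a" "a < b"
  shows "emeasure lborel (W_ex a b) = ennreal ((b\<^sup>2 - a\<^sup>2) * pi / 4)"
proof -
  have "W_ex a b = {w\<in>W_ex a b. fst w \<le> 1 * norm w}"
    by (auto simp: W_ex_def norm_pair_real abs_le_iff intro: order_trans[OF _ real_sqrt_ge_abs1])
  then show ?thesis using annulus1[OF a, of 1] by simp
qed

lemma W_measure:
  assumes a: "0 < a" "a < b"
  shows "measure lborel (W_ex a b) = (b\<^sup>2 - a\<^sup>2) * pi / 4"
proof -
  have "a\<^sup>2 < b\<^sup>2" using a by (simp add: power_strict_mono)
  then show ?thesis using W_emeasure[OF a] by (simp add: measure_def)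
qed

lemma U_prob:
  assumes a: "0 < a" "a < b"
  shows "prob_space (uniform_measure lborel (W_ex a b))"
proof -
  have "a\<^sup>2 < b\<^sup>2" using a by (simp add: power_strict_mono)
  then show ?thesis using W_emeasure[OF a] by (intro prob_space_uniform_measure) auto
qed

lemma G_prob:
  assumes a: "0 < a" "a < b"
  shows "prob_space (G_ex a b)"
proof -
  interpret U: prob_space "uniform_measure lborel (W_ex a b)" by (rule U_prob[OF a])
  show ?thesis unfolding G_ex_def
    by (rule U.prob_space_distr) (use fmap_meas in simp)
qed

lemma sets_G: "sets (G_ex a b) = sets borel" by (simp add: G_ex_def)
lemma space_G: "space (G_ex a b) = UNIV" by (simp add: G_ex_def)

definition Xg :: "item \<Rightarrow> btype \<Rightarrow> real" where
  "Xg \<alpha> \<theta> = (fst \<theta> \<bullet> \<alpha>) / norm (fst \<theta>)"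

lemma Xg_eq: "val \<theta> \<alpha> / (1 + mu_ex \<theta>) = Xg \<alpha> \<theta>"
  by (simp add: val_def mu_ex_def Xg_def)

lemma fst_meas2[measurable]: "fst \<in> measurable (borel::btype measure) (borel::(real\<times>real) measure)"
  by (intro borel_measurable_continuous_onI continuous_intros)

lemma Xg_meas[measurable]: "Xg \<alpha> \<in> borel_measurable borel"
proof -
  have "(\<lambda>w::real\<times>real. (w \<bullet> \<alpha>) / norm w) \<in> borel_measurable borel" by measurable
  then show ?thesis unfolding Xg_def by (rule measurable_compose[OF fst_meas2])
qed

lemma G_measure:
  assumes a: "0 < a" "a < b" and al: "\<alpha> \<in> {e1, e2}" and y: "y \<le> 1"
  shows "measure (G_ex a b) {\<theta>. Xg \<alpha> \<theta> \<le> y} = (if y < 0 then 0 else Hf y)"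
proof -
  let ?U = "uniform_measure lborel (W_ex a b)"
  have ab: "a\<^sup>2 < b\<^sup>2" using a by (simp add: power_strict_mono)
  have sU: "sets ?U = sets (borel::(real\<times>real) measure)" by simp
  have fm: "(\<lambda>w. (w, budget_ex w)) \<in> measurable ?U (borel :: btype measure)"
    using fmap_meas measurable_cong_sets[OF sU refl] by simp
  have Sm: "{\<theta>. Xg \<alpha> \<theta> \<le> y} \<in> sets (borel :: btype measure)" by measurable
  have "measure (G_ex a b) {\<theta>. Xg \<alpha> \<theta> \<le> y}
      = measure ?U ((\<lambda>w. (w, budget_ex w)) -` {\<theta>. Xg \<alpha> \<theta> \<le> y} \<inter> space ?U)"
    unfolding G_ex_def by (rule measure_distr[OF fm Sm])
  also have "(\<lambda>w. (w, budget_ex w)) -` {\<theta>. Xg \<alpha> \<theta> \<le> y} \<inter> space ?U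
      = {w. (w \<bullet> \<alpha>) / norm w \<le> y}"
    by (simp add: Xg_def set_eq_iff)
  also have "measure ?U {w. (w \<bullet> \<alpha>) / norm w \<le> y}
      = measure lborel (W_ex a b \<inter> {w. (w \<bullet> \<alpha>) / norm w \<le> y}) / measure lborel (W_ex a b)"
  proof (rule measure_uniform_measure)
    show "emeasure lborel (W_ex a b) \<noteq> 0" "emeasure lborel (W_ex a b) \<noteq> \<infinity>"
      using W_emeasure[OF a] ab by simp_all
    show "{w. w \<bullet> \<alpha> / norm w \<le> y} \<in> sets lborel" by simp
  qed
  also have "W_ex a b \<inter> {w. (w \<bullet> \<alpha>) / norm w \<le> y} = {w\<in>W_ex a b. w \<bullet> \<alpha> \<le> y * norm w}"
  proof (intro set_eqI iffI)
    fix w assume "w \<in> W_ex a b \<inter> {w. (w \<bullet> \<alpha>) / norm w \<le> y}"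
    then have w: "w \<in> W_ex a b" "(w \<bullet> \<alpha>) / norm w \<le> y" by auto
    then have "0 < norm w" using a by (auto simp: W_ex_def)
    then show "w \<in> {w\<in>W_ex a b. w \<bullet> \<alpha> \<le> y * norm w}" using w pos_divide_le_eq[of "norm w"] by simp
  next
    fix w assume "w \<in> {w\<in>W_ex a b. w \<bullet> \<alpha> \<le> y * norm w}"
    then have w: "w \<in> W_ex a b" "w \<bullet> \<alpha> \<le> y * norm w" by auto
    then have "0 < norm w" using a by (auto simp: W_ex_def)
    then show "w \<in> W_ex a b \<inter> {w. (w \<bullet> \<alpha>) / norm w \<le> y}" using w pos_divide_le_eq[of "norm w"] by simp
  qed
  finally have eq: "measure (G_ex a b) {\<theta>. Xg \<alpha> \<theta> \<le> y} =
     measure lborel {w\<in>W_ex a b. w \<bullet> \<alpha> \<le> y * norm w} / ((b\<^sup>2 - a\<^sup>2) * pi / 4)"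
    using W_measure[OF a] by simp
  show ?thesis
  proof (cases "y < 0")
    case True
    have "{w\<in>W_ex a b. w \<bullet> \<alpha> \<le> y * norm w} = {}"
    proof -
      { fix w assume w: "w \<in> W_ex a b" "w \<bullet> \<alpha> \<le> y * norm w"
        then have n: "0 < norm w" using a by (auto simp: W_ex_def)
        have i: "0 \<le> w \<bullet> \<alpha>" using w al by (auto simp: W_ex_def inner_e1 inner_e2)
        have "y * norm w < 0" using n True by (simp add: mult_neg_pos)
        then have False using w(2) i by linarith }
      then show ?thesis by blast
    qed
    then have "measure lborel {w\<in>W_ex a b. w \<bullet> \<alpha> \<le> y * norm w} = 0" by (simp only: measure_empty)
    then show ?thesis using eq True by simp
  next
    case False
    have ay: "0 \<le> arcsin y" using False arcsin_le_mono[of 0 y] y by simp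
    have "emeasure lborel {w\<in>W_ex a b. w \<bullet> \<alpha> \<le> y * norm w} = ennreal ((b\<^sup>2 - a\<^sup>2) * arcsin y / 2)"
      using annulus[OF a _ y al] False by simp
    then have ml: "measure lborel {w\<in>W_ex a b. w \<bullet> \<alpha> \<le> y * norm w} = (b\<^sup>2 - a\<^sup>2) * arcsin y / 2"
      using ay ab by (simp add: measure_def)
    have "measure (G_ex a b) {\<theta>. Xg \<alpha> \<theta> \<le> y} = ((b\<^sup>2 - a\<^sup>2) * arcsin y / 2) / ((b\<^sup>2 - a\<^sup>2) * pi / 4)"
      using eq ml by (simp only:)
    also have "\<dots> = Hf y" using ab by (simp add: Hf_def)
    finally show ?thesis using False by simp
  qed
qed
lemma Hdist_eq:
  assumes a: "0 < a" "a < b" and al: "\<alpha> \<in> {e1, e2}" and y: "y \<le> 1"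
  shows "Hdist 2 (G_ex a b) mu_ex \<alpha> y = (if y < 0 then 0 else Hf y)"
proof -
  have pd: "paced_dist (G_ex a b) mu_ex \<alpha> = distr (G_ex a b) borel (Xg \<alpha>)"
    unfolding paced_dist_def Xg_eq ..
  have m: "Xg \<alpha> \<in> measurable (G_ex a b) borel"
    by (simp add: measurable_cong_sets[OF sets_G refl])
  have "measure (distr (G_ex a b) borel (Xg \<alpha>)) {..y} = measure (G_ex a b) (Xg \<alpha> -` {..y} \<inter> space (G_ex a b))"
    using m by (intro measure_distr) auto
  also have "Xg \<alpha> -` {..y} \<inter> space (G_ex a b) = {\<theta>. Xg \<alpha> \<theta> \<le> y}" by (auto simp: space_G)
  finally show ?thesis using G_measure[OF a al y] by (simp add: Hdist_def pd)
qed

lemma integral_Hf: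
  assumes z: "0 < z" "z \<le> 1"
  shows "(LBINT s:{0..z}. Hf s / Hf z) = (z * arcsin z + sqrt (1 - z\<^sup>2) - 1) / arcsin z"
proof -
  have az: "0 < arcsin z" using z arcsin_less_mono[of 0 z] by simp
  have f: "(\<lambda>s. Hf s / Hf z) = (\<lambda>s. arcsin s / arcsin z)"
    using az by (auto simp: Hf_def)
  define F where "F s = (s * arcsin s + sqrt (1 - s\<^sup>2)) / arcsin z" for s
  have "((\<lambda>s. arcsin s / arcsin z) has_integral (F z - F 0)) {0..z}"
  proof (rule fundamental_theorem_of_calculus_interior)
    show "0 \<le> z" using z by simp
    have b: "\<forall>x\<in>{0..z}. - 1 \<le> x \<and> x \<le> 1" using z by auto
    show "continuous_on {0..z} F" unfolding F_def
      using b az by (intro continuous_intros) auto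
    fix s assume s: "s \<in> {0<..<z}"
    then have s1: "-1 < s" "s < 1" using z by auto
    have p: "0 < 1 - s\<^sup>2" using s1 by (simp add: abs_square_less_1)
    have sp: "sqrt (1 - s\<^sup>2) > 0" using p by simp
    have azn: "arcsin z \<noteq> 0" using az by simp
    have ds: "DERIV (\<lambda>s. sqrt (1 - s\<^sup>2)) s :> - s / sqrt (1 - s\<^sup>2)"
      using deriv_sqrt_part[of s 1] s z by simp
    have "DERIV F s :> arcsin s / arcsin z"
      unfolding F_def
      apply (rule DERIV_cong)
       apply (rule DERIV_arcsin[OF s1] ds derivative_eq_intros refl | simp add: azn)+
      apply (simp add: inverse_eq_divide)
      done
    then show "(F has_vector_derivative arcsin s / arcsin z) (at s)"
      by (simp add: has_real_derivative_iff_has_vector_derivative[symmetric])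
  qed
  then have hi: "((\<lambda>s. arcsin s / arcsin z) has_integral ((z * arcsin z + sqrt (1 - z\<^sup>2) - 1) / arcsin z)) {0..z}"
    by (simp add: F_def diff_divide_distrib)
  have ci: "continuous_on {0..z} (\<lambda>s. arcsin s / arcsin z)"
    using z az by (intro continuous_intros) auto
  have si: "set_integrable lborel {0..z} (\<lambda>s. arcsin s / arcsin z)"
    unfolding set_integrable_def by (rule borel_integrable_compact[OF compact_Icc ci])
  show ?thesis unfolding f set_borel_integral_eq_integral(2)[OF si]
    using hi by (rule integral_unique)
qed

lemma sigma_eq:
  assumes a: "0 < a" "a < b" and al: "\<alpha> \<in> {e1, e2}" and z: "- 1 \<le> z" "z \<le> 1"
  shows "sigma_bid 2 (G_ex a b) mu_ex \<alpha> z = gf z"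
proof (cases "z \<le> 0")
  case True
  have "Hdist 2 (G_ex a b) mu_ex \<alpha> z = 0"
    using Hdist_eq[OF a al z(2)] True by (auto simp: Hf_def)
  then show ?thesis using True by (simp add: sigma_bid_def gf_def)
next
  case False
  then have z0: "0 < z" by simp
  have az: "0 < arcsin z" using z0 z arcsin_less_mono[of 0 z] by simp
  have Hz: "Hdist 2 (G_ex a b) mu_ex \<alpha> z = Hf z"
    using Hdist_eq[OF a al z(2)] z0 by simp
  have Hzp: "0 < Hf z" using az by (simp add: Hf_def)
  have "(LBINT s:{0..z}. Hdist 2 (G_ex a b) mu_ex \<alpha> s / Hdist 2 (G_ex a b) mu_ex \<alpha> z)
      = (LBINT s:{0..z}. Hf s / Hf z)"
  proof (rule set_lebesgue_integral_cong)
    show "{0..z} \<in> sets lborel" by simp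
    show "\<forall>x. x \<in> {0..z} \<longrightarrow> Hdist 2 (G_ex a b) mu_ex \<alpha> x / Hdist 2 (G_ex a b) mu_ex \<alpha> z = Hf x / Hf z"
      using Hdist_eq[OF a al] z Hz by auto
  qed
  also have "\<dots> = (z * arcsin z + sqrt (1 - z\<^sup>2) - 1) / arcsin z"
    using integral_Hf[OF z0 z(2)] .
  finally have I: "(LBINT s:{0..z}. Hdist 2 (G_ex a b) mu_ex \<alpha> s / Hdist 2 (G_ex a b) mu_ex \<alpha> z)
      = (z * arcsin z + sqrt (1 - z\<^sup>2) - 1) / arcsin z" .
  have "z - (z * arcsin z + sqrt (1 - z\<^sup>2) - 1) / arcsin z = (1 - sqrt (1 - z\<^sup>2)) / arcsin z"
    using az by (simp add: field_simps)
  then show ?thesis using Hz Hzp I z0 by (simp add: sigma_bid_def gf_def)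
qed

lemma Xg_bound: "- 1 \<le> Xg \<alpha> \<theta> \<and> Xg \<alpha> \<theta> \<le> 1" if "\<alpha> \<in> {e1, e2}"
proof -
  have ne: "norm \<alpha> = 1" using that by (auto simp: e1_def e2_def norm_Pair)
  have "\<bar>fst \<theta> \<bullet> \<alpha>\<bar> \<le> norm (fst \<theta>)" using Cauchy_Schwarz_ineq2[of "fst \<theta>" \<alpha>] ne by simp
  then have "\<bar>Xg \<alpha> \<theta>\<bar> \<le> 1"
    by (cases "norm (fst \<theta>) = 0") (auto simp: Xg_def abs_divide divide_le_eq_1)
  then show ?thesis by auto
qed

lemma beta_eq:
  assumes a: "0 < a" "a < b" and al: "\<alpha> \<in> {e1, e2}"
  shows "beta_pacing 2 (G_ex a b) mu_ex \<theta> \<alpha> = gf (Xg \<alpha> \<theta>)"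
  using sigma_eq[OF a al] Xg_bound[OF al, of \<theta>] by (simp add: beta_pacing_def Xg_eq)

lemma gf_le_iff2:
  assumes "0 \<le> y" "y \<le> 1" "- 1 \<le> z" "z \<le> 1"
  shows "gf z \<le> gf y \<longleftrightarrow> z \<le> y"
proof (cases "z \<le> 0")
  case True
  then show ?thesis using gf_nonneg[of y] assms by (auto simp: gf_def)
next
  case False
  then show ?thesis using gf_le_iff[of y z] assms by auto
qed

lemma bid_set:
  assumes a: "0 < a" "a < b" and al: "\<alpha> \<in> {e1, e2}" and t: "0 \<le> t"
  shows "\<exists>y. 0 \<le> y \<and> y \<le> 1 \<and> gf y \<le> t \<and>
     {\<theta>. beta_pacing 2 (G_ex a b) mu_ex \<theta> \<alpha> \<le> t} = {\<theta>. Xg \<alpha> \<theta> \<le> y}"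
proof (cases "gf 1 \<le> t")
  case True
  have "{\<theta>. beta_pacing 2 (G_ex a b) mu_ex \<theta> \<alpha> \<le> t} = {\<theta>. Xg \<alpha> \<theta> \<le> 1}"
  proof -
    { fix \<theta>
      have "gf (Xg \<alpha> \<theta>) \<le> gf 1" using gf_le_iff2[of 1 "Xg \<alpha> \<theta>"] Xg_bound[OF al, of \<theta>] by auto
      then have "gf (Xg \<alpha> \<theta>) \<le> t" using True by simp }
    then show ?thesis using Xg_bound[OF al] beta_eq[OF a al] by auto
  qed
  then show ?thesis using True by (intro exI[of _ 1]) auto
next
  case False
  then obtain y where y: "0 \<le> y" "y \<le> 1" "gf y = t" using gf_ivt[OF t] by auto
  have "{\<theta>. beta_pacing 2 (G_ex a b) mu_ex \<theta> \<alpha> \<le> t} = {\<theta>. Xg \<alpha> \<theta> \<le> y}"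
    using gf_le_iff2[OF y(1,2)] Xg_bound[OF al] beta_eq[OF a al] y(3) by auto
  then show ?thesis using y by (intro exI[of _ y]) auto
qed

lemma exact_set:
  assumes a: "0 < a" "a < b" and al: "\<alpha> \<in> {e1, e2}" and x: "0 \<le> x" "x \<le> 1"
  shows "{\<theta>. beta_pacing 2 (G_ex a b) mu_ex \<theta> \<alpha> \<le> gf x} = {\<theta>. Xg \<alpha> \<theta> \<le> x}"
  using gf_le_iff2[OF x] Xg_bound[OF al] beta_eq[OF a al] by auto

lemma inner_int:
  assumes a: "0 < a" "a < b" and al: "\<alpha> \<in> {e1, e2}" and t: "0 \<le> t" and y: "0 \<le> y" "y \<le> 1"
    and S: "{\<theta>. beta_pacing 2 (G_ex a b) mu_ex \<theta> \<alpha> \<le> t} = {\<theta>. Xg \<alpha> \<theta> \<le> y}"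
  shows "(\<integral>\<theta>s. c * (if wins 2 (\<lambda>_. 0) (beta_pacing 2 (G_ex a b) mu_ex) t \<alpha> \<theta>s then 1 else 0)
           \<partial>(PiM {..<(2::nat) - 1} (\<lambda>_. G_ex a b))) = c * Hf y"
proof -
  define S where "S = {\<theta>. Xg \<alpha> \<theta> \<le> y}"
  have Ss: "S \<in> sets (G_ex a b)" unfolding S_def sets_G by measurable
  have w: "(if wins 2 (\<lambda>_. 0) (beta_pacing 2 (G_ex a b) mu_ex) t \<alpha> \<theta>s then 1 else 0) = indicator S (\<theta>s 0)"
    for \<theta>s :: "nat \<Rightarrow> btype"
  proof -
    from S have Si: "\<forall>\<theta>. (beta_pacing 2 (G_ex a b) mu_ex \<theta> \<alpha> \<le> t) = (Xg \<alpha> \<theta> \<le> y)"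
      unfolding set_eq_iff mem_Collect_eq .
    have "wins 2 (\<lambda>_. 0) (beta_pacing 2 (G_ex a b) mu_ex) t \<alpha> \<theta>s \<longleftrightarrow> \<theta>s 0 \<in> S"
    proof -
      have "(beta_pacing 2 (G_ex a b) mu_ex (\<theta>s 0) \<alpha> \<le> t) = (Xg \<alpha> (\<theta>s 0) \<le> y)"
        using Si by blast
      then show ?thesis using t by (simp add: wins_def S_def)
    qed
    then show ?thesis by (simp add: indicator_def)
  qed
  have P: "prob_space (G_ex a b)" by (rule G_prob[OF a])
  have D: "distr (PiM {..<(2::nat) - 1} (\<lambda>_. G_ex a b)) (G_ex a b) (\<lambda>\<omega>. \<omega> 0) = G_ex a b"
    using P by (intro distr_PiM_component) auto
  have "(\<integral>\<theta>s. c * indicator S (\<theta>s 0) \<partial>(PiM {..<(2::nat) - 1} (\<lambda>_. G_ex a b)))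
      = (\<integral>\<theta>. c * indicator S \<theta> \<partial>(distr (PiM {..<(2::nat) - 1} (\<lambda>_. G_ex a b)) (G_ex a b) (\<lambda>\<omega>. \<omega> 0)))"
    using Ss by (intro integral_distr[symmetric]) auto
  also have "\<dots> = (\<integral>\<theta>. c * indicator S \<theta> \<partial>G_ex a b)" using D by simp
  also have "\<dots> = c * measure (G_ex a b) S" by (simp add: space_G)
  also have "measure (G_ex a b) S = Hf y"
    using G_measure[OF a al y(2)] y by (simp add: S_def)
  finally show ?thesis by (simp add: w)
qed

lemma F_int: "integral\<^sup>L F_ex (f :: item \<Rightarrow> real) = (f e1 + f e2) / 2"
  unfolding F_ex_def using e1_ne_e2 by (subst integral_pmf_of_set) auto




lemma gf_nonneg_all: "- 1 \<le> z \<Longrightarrow> z \<le> 1 \<Longrightarrow> 0 \<le> gf z"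
  using gf_nonneg[of z] by (cases "z \<le> 0") (auto simp: gf_def)

lemma snd_meas2[measurable]: "snd \<in> borel_measurable (borel::btype measure)"
  by (intro borel_measurable_continuous_onI continuous_intros)

lemma fmapU:
  "(\<lambda>w. (w, budget_ex w)) \<in> measurable (uniform_measure lborel (W_ex a b)) (borel :: btype measure)"
proof -
  have sU: "sets (uniform_measure lborel (W_ex a b)) = sets (borel::(real\<times>real) measure)" by simp
  show ?thesis using fmap_meas measurable_cong_sets[OF sU refl] by simp
qed

lemma AE_good:
  "AE \<theta> in G_ex a b. fst \<theta> \<in> W_ex a b \<and> snd \<theta> = budget_ex (fst \<theta>)"
proof -
  have gm: "{\<theta> \<in> space (borel::btype measure). fst \<theta> \<in> W_ex a b \<and> snd \<theta> = budget_ex (fst \<theta>)} \<in> sets borel"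
    by measurable
  have "AE w in uniform_measure lborel (W_ex a b). w \<in> W_ex a b \<and> budget_ex w = budget_ex w"
    by (rule AE_uniform_measureI) auto
  then show ?thesis unfolding G_ex_def
    by (subst AE_distr_iff[OF fmapU gm]) simp
qed

lemma key_item:
  assumes x: "0 \<le> x" "x \<le> 1" and y: "0 \<le> y" "y \<le> 1" and t: "gf y \<le> t" and rho: "1 \<le> \<rho>"
  shows "(\<rho> * x - t) * Hf y \<le> \<rho> * ((x - gf x) * Hf x) + (\<rho> - 1) * (t * Hf y)"
proof -
  have Hy: "0 \<le> Hf y" using y arcsin_le_mono[of 0 y] by (simp add: Hf_def)
  have ex: "(x - gf x) * Hf x = 2 / pi * (x * arcsin x + sqrt (1 - x\<^sup>2) - 1)"
  proof -
    have "(x - gf x) * Hf x = x * Hf x - gf x * Hf x" by (simp add: algebra_simps)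
    also have "\<dots> = x * (2 / pi * arcsin x) - 2 / pi * (1 - sqrt (1 - x\<^sup>2))"
      unfolding gf_Hf[OF x] by (simp add: Hf_def)
    also have "\<dots> = 2 / pi * (x * arcsin x + sqrt (1 - x\<^sup>2) - 1)" by (simp add: algebra_simps)
    finally show ?thesis .
  qed
  have ey: "(x - gf y) * Hf y = 2 / pi * (x * arcsin y + sqrt (1 - y\<^sup>2) - 1)"
  proof -
    have "(x - gf y) * Hf y = x * Hf y - gf y * Hf y" by (simp add: algebra_simps)
    also have "\<dots> = x * (2 / pi * arcsin y) - 2 / pi * (1 - sqrt (1 - y\<^sup>2))"
      unfolding gf_Hf[OF y] by (simp add: Hf_def)
    also have "\<dots> = 2 / pi * (x * arcsin y + sqrt (1 - y\<^sup>2) - 1)" by (simp add: algebra_simps)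
    finally show ?thesis .
  qed
  have "(x - gf y) * Hf y \<le> (x - gf x) * Hf x"
    unfolding ex ey using concav[OF x y] by (intro mult_left_mono) auto
  moreover have "(x - t) * Hf y \<le> (x - gf y) * Hf y"
    using t Hy by (intro mult_right_mono) auto
  ultimately have c: "(x - t) * Hf y \<le> (x - gf x) * Hf x" by linarith
  have "(\<rho> * x - t) * Hf y = \<rho> * ((x - t) * Hf y) + (\<rho> - 1) * (t * Hf y)"
    by (simp add: algebra_simps)
  also have "\<dots> \<le> \<rho> * ((x - gf x) * Hf x) + (\<rho> - 1) * (t * Hf y)"
    using c rho by (intro add_right_mono mult_left_mono) auto
  finally show ?thesis .
qed

lemma pay_util:
  assumes a: "0 < a" "a < b"
    and b0: "0 \<le> bb e1" "0 \<le> bb e2"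
    and y: "0 \<le> y1" "y1 \<le> 1" "0 \<le> y2" "y2 \<le> 1"
    and S1: "{\<theta>. beta_pacing 2 (G_ex a b) mu_ex \<theta> e1 \<le> bb e1} = {\<theta>. Xg e1 \<theta> \<le> y1}"
    and S2: "{\<theta>. beta_pacing 2 (G_ex a b) mu_ex \<theta> e2 \<le> bb e2} = {\<theta>. Xg e2 \<theta> \<le> y2}"
  shows "exp_payment 2 (G_ex a b) F_ex (\<lambda>_. 0) (beta_pacing 2 (G_ex a b) mu_ex) bb
           = (bb e1 * Hf y1 + bb e2 * Hf y2) / 2"
    and "exp_utility 2 (G_ex a b) F_ex (\<lambda>_. 0) (beta_pacing 2 (G_ex a b) mu_ex) \<theta> bb
           = ((val \<theta> e1 - bb e1) * Hf y1 + (val \<theta> e2 - bb e2) * Hf y2) / 2"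
proof -
  have e1: "e1 \<in> {e1, e2}" and e2: "e2 \<in> {e1, e2}" by auto
  show "exp_payment 2 (G_ex a b) F_ex (\<lambda>_. 0) (beta_pacing 2 (G_ex a b) mu_ex) bb
           = (bb e1 * Hf y1 + bb e2 * Hf y2) / 2"
    unfolding exp_payment_def F_int
    by (simp only: inner_int[OF a e1 b0(1) y(1,2) S1] inner_int[OF a e2 b0(2) y(3,4) S2])
  show "exp_utility 2 (G_ex a b) F_ex (\<lambda>_. 0) (beta_pacing 2 (G_ex a b) mu_ex) \<theta> bb
           = ((val \<theta> e1 - bb e1) * Hf y1 + (val \<theta> e2 - bb e2) * Hf y2) / 2"
    unfolding exp_utility_def F_int
    by (simp only: inner_int[OF a e1 b0(1) y(1,2) S1] inner_int[OF a e2 b0(2) y(3,4) S2])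
qed

lemma half_le: "(P::real) / 2 \<le> s \<Longrightarrow> R / 2 = s \<Longrightarrow> P \<le> R" by linarith

lemma comb: "(A1::real) \<le> C1 + Q1 \<Longrightarrow> A2 \<le> C2 + Q2 \<Longrightarrow> Q1 + Q2 \<le> R1 + R2
   \<Longrightarrow> (A1 + A2) / 2 \<le> ((C1 + R1) + (C2 + R2)) / 2"
proof -
  assume "(A1::real) \<le> C1 + Q1" "A2 \<le> C2 + Q2" "Q1 + Q2 \<le> R1 + R2"
  then have "A1 + A2 \<le> (C1 + R1) + (C2 + R2)" by linarith
  then show ?thesis by (intro divide_right_mono) auto
qed

lemma good_point:
  assumes a1: "1 \<le> a" and ab: "a < b"
    and g: "fst \<theta> \<in> W_ex a b" "snd \<theta> = budget_ex (fst \<theta>)"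
  shows "exp_payment 2 (G_ex a b) F_ex (\<lambda>_. 0) (beta_pacing 2 (G_ex a b) mu_ex) (beta_pacing 2 (G_ex a b) mu_ex \<theta>) \<le> snd \<theta> \<and>
        (\<forall>bb. (\<forall>\<alpha>\<in>{e1, e2}. 0 \<le> bb \<alpha>) \<and> exp_payment 2 (G_ex a b) F_ex (\<lambda>_. 0) (beta_pacing 2 (G_ex a b) mu_ex) bb \<le> snd \<theta>
             \<longrightarrow> exp_utility 2 (G_ex a b) F_ex (\<lambda>_. 0) (beta_pacing 2 (G_ex a b) mu_ex) \<theta> bb
                 \<le> exp_utility 2 (G_ex a b) F_ex (\<lambda>_. 0) (beta_pacing 2 (G_ex a b) mu_ex) \<theta> (beta_pacing 2 (G_ex a b) mu_ex \<theta>))"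
proof -
  have a: "0 < a" "a < b" using a1 ab by auto
  have e1: "e1 \<in> {e1, e2}" and e2: "e2 \<in> {e1, e2}" by auto
  define w where "w = fst \<theta>"
  define \<rho> where "\<rho> = norm w"
  define x1 where "x1 = fst w / \<rho>"
  define x2 where "x2 = snd w / \<rho>"
  have wW: "w \<in> W_ex a b" using g by (simp add: w_def)
  have f0: "0 \<le> fst w" and s0: "0 \<le> snd w" and rho: "a \<le> \<rho>" using wW by (auto simp: W_ex_def \<rho>_def)
  have rho1: "1 \<le> \<rho>" and rho0: "0 < \<rho>" using rho a1 by auto
  have X1: "Xg e1 \<theta> = x1" by (simp add: Xg_def inner_e1 x1_def w_def \<rho>_def)
  have X2: "Xg e2 \<theta> = x2" by (simp add: Xg_def inner_e2 x2_def w_def \<rho>_def)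
  have v1: "val \<theta> e1 = \<rho> * x1" using rho0 by (simp add: val_def inner_e1 x1_def w_def)
  have v2: "val \<theta> e2 = \<rho> * x2" using rho0 by (simp add: val_def inner_e2 x2_def w_def)
  have rr: "\<rho>\<^sup>2 = (fst w)\<^sup>2 + (snd w)\<^sup>2"
  proof -
    have "\<rho> = sqrt ((fst w)\<^sup>2 + (snd w)\<^sup>2)" unfolding \<rho>_def
      using norm_pair_real[of "fst w" "snd w"] by simp
    then show ?thesis by simp
  qed
  have x1b: "0 \<le> x1" "x1 \<le> 1" and x2b: "0 \<le> x2" "x2 \<le> 1"
    using Xg_bound[OF e1, of \<theta>] Xg_bound[OF e2, of \<theta>] X1 X2 f0 s0 rho0
    by (auto simp: x1_def x2_def)
  have sq: "x1\<^sup>2 + x2\<^sup>2 = 1"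
  proof -
    have "x1\<^sup>2 + x2\<^sup>2 = ((fst w)\<^sup>2 + (snd w)\<^sup>2) / \<rho>\<^sup>2"
      by (simp add: x1_def x2_def power_divide add_divide_distrib)
    also have "\<dots> = \<rho>\<^sup>2 / \<rho>\<^sup>2" using rr by simp
    also have "\<dots> = 1" using rho0 by simp
    finally show ?thesis .
  qed
  have sx1: "sqrt (1 - x1\<^sup>2) = x2"
  proof -
    have "1 - x1\<^sup>2 = x2\<^sup>2" using sq by simp
    then show ?thesis using x2b by simp
  qed
  have sx2: "sqrt (1 - x2\<^sup>2) = x1"
  proof -
    have "1 - x2\<^sup>2 = x1\<^sup>2" using sq by simp
    then show ?thesis using x1b by simp
  qed
  have B: "snd \<theta> = (2 - x1 - x2) / pi"
  proof -
    have "snd \<theta> = (2 * \<rho> - fst w - snd w) / (pi * \<rho>)" using g by (simp add: budget_ex_def w_def \<rho>_def)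
    also have "\<dots> = (2 - x1 - x2) / pi" using rho0 by (simp add: x1_def x2_def field_simps)
    finally show ?thesis .
  qed
  let ?\<beta> = "beta_pacing 2 (G_ex a b) mu_ex"
  have bt1: "?\<beta> \<theta> e1 = gf x1" using beta_eq[OF a e1] X1 by simp
  have bt2: "?\<beta> \<theta> e2 = gf x2" using beta_eq[OF a e2] X2 by simp
  have PU: "exp_payment 2 (G_ex a b) F_ex (\<lambda>_. 0) ?\<beta> (?\<beta> \<theta>) = (gf x1 * Hf x1 + gf x2 * Hf x2) / 2"
           "exp_utility 2 (G_ex a b) F_ex (\<lambda>_. 0) ?\<beta> \<theta> (?\<beta> \<theta>) = ((val \<theta> e1 - gf x1) * Hf x1 + (val \<theta> e2 - gf x2) * Hf x2) / 2"
    using pay_util[OF a, of "?\<beta> \<theta>" x1 x2, OF _ _ x1b x2b] exact_set[OF a e1 x1b] exact_set[OF a e2 x2b]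
      gf_nonneg[OF x1b] gf_nonneg[OF x2b] bt1 bt2 by simp_all
  have payeq: "(gf x1 * Hf x1 + gf x2 * Hf x2) / 2 = snd \<theta>"
    unfolding gf_Hf[OF x1b] gf_Hf[OF x2b] sx1 sx2 B by (simp add: field_simps)
  show ?thesis
  proof (intro conjI allI impI)
    show "exp_payment 2 (G_ex a b) F_ex (\<lambda>_. 0) ?\<beta> (?\<beta> \<theta>) \<le> snd \<theta>" using PU(1) payeq by simp
    fix bb assume h: "(\<forall>\<alpha>\<in>{e1, e2}. 0 \<le> bb \<alpha>) \<and> exp_payment 2 (G_ex a b) F_ex (\<lambda>_. 0) ?\<beta> bb \<le> snd \<theta>"
    then have b1: "0 \<le> bb e1" and b2: "0 \<le> bb e2" by auto
    obtain y1 where y1: "0 \<le> y1" "y1 \<le> 1" "gf y1 \<le> bb e1"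
      "{\<theta>. ?\<beta> \<theta> e1 \<le> bb e1} = {\<theta>. Xg e1 \<theta> \<le> y1}"
      using bid_set[OF a e1 b1] by blast
    obtain y2 where y2: "0 \<le> y2" "y2 \<le> 1" "gf y2 \<le> bb e2"
      "{\<theta>. ?\<beta> \<theta> e2 \<le> bb e2} = {\<theta>. Xg e2 \<theta> \<le> y2}"
      using bid_set[OF a e2 b2] by blast
    note pu = pay_util[OF a b1 b2 y1(1,2) y2(1,2) y1(4) y2(4)]
    have pay: "(bb e1 * Hf y1 + bb e2 * Hf y2) / 2 \<le> snd \<theta>" using h pu(1) by simp
    have k1: "(\<rho> * x1 - bb e1) * Hf y1 \<le> \<rho> * ((x1 - gf x1) * Hf x1) + (\<rho> - 1) * (bb e1 * Hf y1)"
      by (rule key_item[OF x1b y1(1,2,3) rho1])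
    have k2: "(\<rho> * x2 - bb e2) * Hf y2 \<le> \<rho> * ((x2 - gf x2) * Hf x2) + (\<rho> - 1) * (bb e2 * Hf y2)"
      by (rule key_item[OF x2b y2(1,2,3) rho1])
    have "bb e1 * Hf y1 + bb e2 * Hf y2 \<le> gf x1 * Hf x1 + gf x2 * Hf x2"
      using pay payeq by (rule half_le)
    then have "(\<rho> - 1) * (bb e1 * Hf y1 + bb e2 * Hf y2) \<le> (\<rho> - 1) * (gf x1 * Hf x1 + gf x2 * Hf x2)"
      using rho1 by (intro mult_left_mono) auto
    then have m: "(\<rho> - 1) * (bb e1 * Hf y1) + (\<rho> - 1) * (bb e2 * Hf y2) \<le> (\<rho> - 1) * (gf x1 * Hf x1) + (\<rho> - 1) * (gf x2 * Hf x2)"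
      unfolding distrib_left .
    have i1: "(\<rho> * x1 - gf x1) * Hf x1 = \<rho> * ((x1 - gf x1) * Hf x1) + (\<rho> - 1) * (gf x1 * Hf x1)"
      by (simp add: algebra_simps)
    have i2: "(\<rho> * x2 - gf x2) * Hf x2 = \<rho> * ((x2 - gf x2) * Hf x2) + (\<rho> - 1) * (gf x2 * Hf x2)"
      by (simp add: algebra_simps)
    have "((\<rho> * x1 - bb e1) * Hf y1 + (\<rho> * x2 - bb e2) * Hf y2) / 2
        \<le> ((\<rho> * x1 - gf x1) * Hf x1 + (\<rho> * x2 - gf x2) * Hf x2) / 2"
      unfolding i1 i2 by (rule comb[OF k1 k2 m])
    then show "exp_utility 2 (G_ex a b) F_ex (\<lambda>_. 0) ?\<beta> \<theta> bb \<le> exp_utility 2 (G_ex a b) F_ex (\<lambda>_. 0) ?\<beta> \<theta> (?\<beta> \<theta>)"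
      unfolding pu(2)[of \<theta>] PU(2) v1 v2 .
  qed
qed

theorem claim1:
  fixes a b :: real
  assumes "1 \<le> a" and "a < b"
  shows "is_SFPE 2 (G_ex a b) F_ex (Theta_ex a b) {e1, e2} (\<lambda>_. 0)
           (beta_pacing 2 (G_ex a b) mu_ex)"
proof -
  have a: "0 < a" "a < b" using assms by auto
  have nn: "\<forall>\<theta>\<in>Theta_ex a b. \<forall>\<alpha>\<in>{e1, e2}. 0 \<le> beta_pacing 2 (G_ex a b) mu_ex \<theta> \<alpha>"
  proof (intro ballI)
    fix \<theta> \<alpha> assume "\<alpha> \<in> {e1, e2}"
    then show "0 \<le> beta_pacing 2 (G_ex a b) mu_ex \<theta> \<alpha>"
      using beta_eq[OF a] Xg_bound gf_nonneg_all by metis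
  qed
  have "AE \<theta> in G_ex a b.
        exp_payment 2 (G_ex a b) F_ex (\<lambda>_. 0) (beta_pacing 2 (G_ex a b) mu_ex) (beta_pacing 2 (G_ex a b) mu_ex \<theta>) \<le> snd \<theta> \<and>
        (\<forall>bb. (\<forall>\<alpha>\<in>{e1, e2}. 0 \<le> bb \<alpha>) \<and> exp_payment 2 (G_ex a b) F_ex (\<lambda>_. 0) (beta_pacing 2 (G_ex a b) mu_ex) bb \<le> snd \<theta>
             \<longrightarrow> exp_utility 2 (G_ex a b) F_ex (\<lambda>_. 0) (beta_pacing 2 (G_ex a b) mu_ex) \<theta> bb
                 \<le> exp_utility 2 (G_ex a b) F_ex (\<lambda>_. 0) (beta_pacing 2 (G_ex a b) mu_ex) \<theta> (beta_pacing 2 (G_ex a b) mu_ex \<theta>))"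
    using AE_good by (rule eventually_mono) (use good_point[OF assms] in blast)
  then show ?thesis using nn unfolding is_SFPE_def by blast
qed



end
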